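(* Let $A \in \mathbb{R}^{m \times r}$, $B \in \mathbb{R}^{r \times n}$, and $S \subseteq \mathbb{R}^n$. The following are equivalent: (i) $\ker(A_\kappa B_\lambda) \cap S = \emptyset$ for all $\kappa \in \mathbb{R}^r_+$ and $\lambda\in \mathbb{R}^n_+$; (ii) $\sigma(\ker(A)) \cap \sigma(B(\Sigma(S))) = \emptyset$.
   Context: $\mathbb{R}_+$ denotes the strictly positive reals. $A_\kappa = A\,\mathrm{diag}(\kappa)$, $B_\lambda = B\,\mathrm{diag}(\lambda)$. For $x\in\mathbb{R}^n$, $\sigma(x)\in\{-,0,+\}^n$ is the componentwise sign vector; for $T\subseteq\mathbb{R}^n$, $\sigma(T)=\{\sigma(x)\mid x\in T\}$ and $\Sigma(T)=\sigma^{-1}(\sigma(T))=\{\lambda\circ x\mid \lambda\in\mathbb{R}^n_+, x\in T\}$, where $\circ$ is the componentwise product. $B(T)=\{Bx\mid x\in T\}$. *)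

theory Defs
  imports "HOL-Analysis.Analysis"
begin

definition diag_mat :: "real ^ 'n \<Rightarrow> real ^ 'n ^ 'n" where
  "diag_mat v = (\<chi> i j. if i = j then v $ i else 0)"

definition ker_mat :: "real ^ 'c ^ 'r \<Rightarrow> (real ^ 'c) set" where
  "ker_mat M = {x. M *v x = 0}"

definition pos_orthant :: "(real ^ 'n) set" where
  "pos_orthant = {v. \<forall>i. v $ i > 0}"

text \<open>Componentwise sign vector, entries in {-1,0,1} encoding {-,0,+}.\<close>
definition sign_vec :: "real ^ 'n \<Rightarrow> real ^ 'n" where
  "sign_vec x = (\<chi> i. sgn (x $ i))"

definition Sigma_set :: "(real ^ 'n) set \<Rightarrow> (real ^ 'n) set" where
  "Sigma_set T = {(\<chi> i. l $ i * x $ i) | l x. l \<in> pos_orthant \<and> x \<in> T}"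

end

theory Submission
  imports Defs
begin

lemma diag_mul: "diag_mat v *v x = (\<chi> i. v$i * x$i)"
  proof -
  have "(\<Sum>j\<in>UNIV. (if i = j then v $ i else 0) * x $ j) = v$i * x$i" for i :: 'a
    by (simp add: if_distrib[of "\<lambda>t. t * _"] cong: if_cong)
  thus ?thesis by (simp add: vec_eq_iff matrix_vector_mult_def diag_mat_def)
qed

lemma mat_app: "((A ** diag_mat k) ** (B ** diag_mat l)) *v x
   = A *v (diag_mat k *v (B *v (diag_mat l *v x)))"
  by (simp add: matrix_vector_mul_assoc[symmetric] matrix_mul_assoc)

theorem mainTheorem4:
  fixes A :: "real ^ 'r ^ 'm" and B :: "real ^ 'n ^ 'r" and S :: "(real ^ 'n) set"
  shows "(\<forall>\<kappa> \<in> pos_orthant. \<forall>l \<in> pos_orthant.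
            ker_mat ((A ** diag_mat \<kappa>) ** (B ** diag_mat l)) \<inter> S = {})
     \<longleftrightarrow> (sign_vec ` ker_mat A) \<inter> (sign_vec ` ((\<lambda>x. B *v x) ` Sigma_set S)) = {}"
proof
  assume H: "\<forall>\<kappa> \<in> pos_orthant. \<forall>l \<in> pos_orthant.
            ker_mat ((A ** diag_mat \<kappa>) ** (B ** diag_mat l)) \<inter> S = {}"
  show "(sign_vec ` ker_mat A) \<inter> (sign_vec ` ((\<lambda>x. B *v x) ` Sigma_set S)) = {}"
  proof (rule ccontr)
    assume "(sign_vec ` ker_mat A) \<inter> (sign_vec ` ((\<lambda>x. B *v x) ` Sigma_set S)) \<noteq> {}"
    then obtain z l x where z: "A *v z = 0" and l: "l \<in> pos_orthant" and x: "x \<in> S"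
      and sg: "sign_vec z = sign_vec (B *v (\<chi> i. l $ i * x $ i))"
      unfolding ker_mat_def Sigma_set_def by auto
    define y where "y = B *v (\<chi> i. l $ i * x $ i)"
    have sgi: "sgn (z$i) = sgn (y$i)" for i
      using sg unfolding y_def sign_vec_def by (metis vec_lambda_beta)
    define k where "k = (\<chi> i. if y$i = 0 then 1 else z$i / y$i)"
    have kpos: "k \<in> pos_orthant"
      unfolding pos_orthant_def k_def mem_Collect_eq
    proof (intro allI)
      fix i
      show "0 < (\<chi> i. if y$i = 0 then 1 else z$i / y$i) $ i"
        using sgi[of i] by (cases "y$i > 0"; cases "z$i > 0"; auto simp: sgn_if divide_neg_neg split: if_splits)
    qed
    have kz: "diag_mat k *v y = z"
    proof -
      have "k$i * y$i = z$i" for i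
        using sgi[of i] by (auto simp: k_def sgn_if split: if_splits)
      thus ?thesis by (simp add: diag_mul vec_eq_iff)
    qed
    have "((A ** diag_mat k) ** (B ** diag_mat l)) *v x = 0"
      unfolding mat_app by (simp add: diag_mul[of l] y_def[symmetric] kz z)
    hence "x \<in> ker_mat ((A ** diag_mat k) ** (B ** diag_mat l)) \<inter> S"
      using x by (simp add: ker_mat_def)
    thus False using H kpos l by blast
  qed
next
  assume H: "(sign_vec ` ker_mat A) \<inter> (sign_vec ` ((\<lambda>x. B *v x) ` Sigma_set S)) = {}"
  show "\<forall>\<kappa> \<in> pos_orthant. \<forall>l \<in> pos_orthant.
            ker_mat ((A ** diag_mat \<kappa>) ** (B ** diag_mat l)) \<inter> S = {}"
  proof (intro ballI equals0I)
    fix k l x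
    assume k: "k \<in> pos_orthant" and l: "l \<in> pos_orthant"
      and x: "x \<in> ker_mat ((A ** diag_mat k) ** (B ** diag_mat l)) \<inter> S"
    define y where "y = B *v (\<chi> i. l $ i * x $ i)"
    define z where "z = diag_mat k *v y"
    have zk: "z \<in> ker_mat A"
      using x unfolding ker_mat_def mat_app z_def y_def by (simp add: diag_mul)
    have ys: "(\<chi> i. l $ i * x $ i) \<in> Sigma_set S"
      using x l unfolding Sigma_set_def by blast
    have "sign_vec z = sign_vec y"
    proof -
      have "sgn (k$i * y$i) = sgn (y$i)" for i
        using k unfolding pos_orthant_def by (simp add: sgn_mult)
      thus ?thesis by (simp add: sign_vec_def z_def diag_mul vec_eq_iff)
    qed
    have "sign_vec z \<in> (sign_vec ` ker_mat A) \<inter> (sign_vec ` ((\<lambda>x. B *v x) ` Sigma_set S))"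
    proof
      show "sign_vec z \<in> sign_vec ` ker_mat A" using zk by (rule imageI)
      have "y \<in> (\<lambda>x. B *v x) ` Sigma_set S" unfolding y_def using ys by (rule imageI)
      thus "sign_vec z \<in> sign_vec ` ((\<lambda>x. B *v x) ` Sigma_set S)"
        using \<open>sign_vec z = sign_vec y\<close> by simp
    qed
    thus False using H by blast
  qed
qed

end
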